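(* Let $\mathbf{x}=(x_1,\ldots,x_{n_1+n_2})$ be a random vector with a multivariate normal density $f$, and write $\mathbf{x}=(\mathbf{x}^{(1)},\mathbf{x}^{(2)})$ with $\mathbf{x}^{(1)}=(x_1,\ldots,x_{n_1})$ and $\mathbf{x}^{(2)}=(x_{n_1+1},\ldots,x_{n_1+n_2})$. For $k\in\{1,2\}$ let $\widehat{f}_k(\mathbf{x})=\prod_{i=1}^{n_1+n_2} f(x_i\mid \mathbf{x}_{g_k(i)})$ be a Vecchia approximation with conditioning index sets $g_k(i)\subset\{1,\ldots,i-1\}$. 1. If $g_1(i)\subset g_2(i)$ for all $i=1,\ldots,n_1+n_2$, then $\mathrm{KL}\big(f(\mathbf{x})\,\|\,\widehat{f}_1(\mathbf{x})\big)\geq \mathrm{KL}\big(f(\mathbf{x})\,\|\,\widehat{f}_2(\mathbf{x})\big)$. 2. If $g_1(i)\subset g_2(i)$ for all $i=n_1+1,\ldots,n_1+n_2$, then $\mathrm{CKL}\big(f(\mathbf{x}^{(2)}\mid\mathbf{x}^{(1)})\,\|\,\widehat{f}_1(\mathbf{x}^{(2)}\mid\mathbf{x}^{(1)})\big)\geq \mathrm{CKL}\big(f(\mathbf{x}^{(2)}\mid\mathbf{x}^{(1)})\,\|\,\widehat{f}_2(\mathbf{x}^{(2)}\mid\mathbf{x}^{(1)})\big)$.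
   Context: Here $f(x_i\mid \mathbf{x}_{g(i)})$ denotes the exact conditional density of $x_i$ given the subvector $\mathbf{x}_{g(i)}=(x_j)_{j\in g(i)}$ under the true joint density $f$ (for $g(i)=\emptyset$ it is the marginal density of $x_i$). Each Vecchia approximation $\widehat{f}_k$ is a valid (multivariate normal) density on $\mathbb{R}^{n_1+n_2}$, and $\widehat{f}_k(\mathbf{x}^{(2)}\mid\mathbf{x}^{(1)})=\widehat{f}_k(\mathbf{x})/\int \widehat{f}_k(\mathbf{x})\,d\mathbf{x}^{(2)}$ is the conditional density it implies. The Kullback–Leibler divergence is $\mathrm{KL}(f(\mathbf{x})\|\widehat{f}(\mathbf{x}))=\int f(\mathbf{x})\log\big(f(\mathbf{x})/\widehat{f}(\mathbf{x})\big)d\mathbf{x}$, and the conditional KL divergence is $\mathrm{CKL}\big(f(\mathbf{y}\mid\mathbf{z})\|\widehat{f}(\mathbf{y}\mid\mathbf{z})\big)=\int f(\mathbf{z})\int f(\mathbf{y}\mid\mathbf{z})\log\big(f(\mathbf{y}\mid\mathbf{z})/\widehat{f}(\mathbf{y}\mid\mathbf{z})\big)\,d\mathbf{y}\,d\mathbf{z}$, i.e., the KL divergence of the conditional distributions averaged over $\mathbf{z}\sim f$. *)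

theory Defs
  imports "HOL-Analysis.Analysis"
begin

text \<open>Vectors in R^n are functions nat => real; only coordinates 0..n-1 matter.
  Indices are 0-based (paper: 1-based).  The Lebesgue measure on R^I is
  the product measure PiM I (\<lambda>_. lborel).\<close>

abbreviation leb :: "nat set \<Rightarrow> (nat \<Rightarrow> real) measure" where
  "leb I \<equiv> PiM I (\<lambda>_. lborel)"

text \<open>Non-degenerate multivariate normal density on R^n, written with mean mu
  and symmetric positive definite precision matrix P (inverse covariance);
  the constant c is the normalising constant.\<close>
definition is_mvn_density :: "nat \<Rightarrow> ((nat \<Rightarrow> real) \<Rightarrow> real) \<Rightarrow> bool" where
  "is_mvn_density n f \<longleftrightarrow>
     (\<exists>(mu :: nat \<Rightarrow> real) (P :: nat \<Rightarrow> nat \<Rightarrow> real) (c :: real).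
        (\<forall>i<n. \<forall>j<n. P i j = P j i) \<and>
        (\<forall>v :: nat \<Rightarrow> real. (\<exists>i<n. v i \<noteq> 0) \<longrightarrow>
             (\<Sum>i<n. \<Sum>j<n. v i * P i j * v j) > 0) \<and>
        c > 0 \<and>
        f = (\<lambda>x. c * exp (- (1/2) * (\<Sum>i<n. \<Sum>j<n. (x i - mu i) * P i j * (x j - mu j)))) \<and>
        (\<integral>x. f x \<partial>leb {..<n}) = 1)"

definition marg :: "nat \<Rightarrow> ((nat \<Rightarrow> real) \<Rightarrow> real) \<Rightarrow> nat set \<Rightarrow> (nat \<Rightarrow> real) \<Rightarrow> real" where
  "marg n f S x = (\<integral>y. f (\<lambda>j. if j \<in> S then x j else y j) \<partial>leb ({..<n} - S))"

text \<open>Exact conditional density f(x_i | x_S) = marginal of S \<union> {i} / marginal of S.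
  For S = {} this is the marginal density of x_i.\<close>
definition cond_dens :: "nat \<Rightarrow> ((nat \<Rightarrow> real) \<Rightarrow> real) \<Rightarrow> nat set \<Rightarrow> nat \<Rightarrow> (nat \<Rightarrow> real) \<Rightarrow> real" where
  "cond_dens n f S i x = marg n f (insert i S) x / marg n f S x"

definition vecchia :: "nat \<Rightarrow> ((nat \<Rightarrow> real) \<Rightarrow> real) \<Rightarrow> (nat \<Rightarrow> nat set) \<Rightarrow> (nat \<Rightarrow> real) \<Rightarrow> real" where
  "vecchia n f g x = (\<Prod>i<n. cond_dens n f (g i) i x)"

definition KL :: "nat \<Rightarrow> ((nat \<Rightarrow> real) \<Rightarrow> real) \<Rightarrow> ((nat \<Rightarrow> real) \<Rightarrow> real) \<Rightarrow> real" where
  "KL n f h = (\<integral>x. f x * ln (f x / h x) \<partial>leb {..<n})"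

definition merge_vec :: "nat \<Rightarrow> (nat \<Rightarrow> real) \<Rightarrow> (nat \<Rightarrow> real) \<Rightarrow> (nat \<Rightarrow> real)" where
  "merge_vec n1 z y = (\<lambda>j. if j < n1 then z j else y j)"

text \<open>Conditional KL divergence of x^(2) = coordinates n1..<n given
  x^(1) = coordinates 0..<n1, for joint densities f (true) and h (approximation);
  conditional densities are joint / marginal of x^(1).\<close>
definition CKL :: "nat \<Rightarrow> nat \<Rightarrow> ((nat \<Rightarrow> real) \<Rightarrow> real) \<Rightarrow> ((nat \<Rightarrow> real) \<Rightarrow> real) \<Rightarrow> real" where
  "CKL n1 n f h =
     (\<integral>z. marg n f {..<n1} z *
        (\<integral>y. (let x = merge_vec n1 z y;
                   p = f x / marg n f {..<n1} x;
                   q = h x / marg n h {..<n1} x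
               in p * ln (p / q)) \<partial>leb {n1..<n})
      \<partial>leb {..<n1})"

end

theory Submission
  imports Defs "HOL-Probability.Probability"
begin

definition qf :: "nat set \<Rightarrow> (nat\<Rightarrow>nat\<Rightarrow>real) \<Rightarrow> (nat\<Rightarrow>real) \<Rightarrow> real \<Rightarrow> (nat\<Rightarrow>real) \<Rightarrow> real" where
  "qf S A b c x = (\<Sum>i\<in>S. \<Sum>l\<in>S. A i l * x i * x l) + (\<Sum>i\<in>S. b i * x i) + c"

definition negdef :: "nat set \<Rightarrow> (nat\<Rightarrow>nat\<Rightarrow>real) \<Rightarrow> bool" where
  "negdef S A \<longleftrightarrow> (\<forall>i\<in>S. \<forall>l\<in>S. A i l = A l i) \<and>
     (\<forall>v. (\<exists>i\<in>S. v i \<noteq> 0) \<longrightarrow> (\<Sum>i\<in>S. \<Sum>l\<in>S. A i l * v i * v l) < 0)"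

lemma qf_upd:
  assumes "finite S" "j \<in> S" "\<forall>i\<in>S. \<forall>l\<in>S. A i l = A l i"
  shows "qf S A b c (x(j:=t)) = A j j * t\<^sup>2 + (2*(\<Sum>l\<in>S-{j}. A j l * x l) + b j) * t + qf (S-{j}) A b c x"
proof -
  define S0 where "S0 = S - {j}"
  have S: "S = insert j S0" "j \<notin> S0" "finite S0" using assms S0_def by auto
  define y where "y = x(j:=t)"
  have yj: "y j = t" by (simp add: y_def)
  have y0: "\<And>i. i \<in> S0 \<Longrightarrow> y i = x i" using S by (auto simp: y_def)
  have i1: "(\<Sum>l\<in>S. A i l * y i * y l) = A i j * y i * t + (\<Sum>l\<in>S0. A i l * y i * x l)" for i
  proof -
    have "(\<Sum>l\<in>S. A i l * y i * y l) = A i j * y i * y j + (\<Sum>l\<in>S0. A i l * y i * y l)"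
      unfolding S(1) by (rule sum.insert[OF S(3) S(2)])
    also have "(\<Sum>l\<in>S0. A i l * y i * y l) = (\<Sum>l\<in>S0. A i l * y i * x l)"
      by (rule sum.cong[OF refl]) (simp add: y0)
    finally show ?thesis by (simp add: yj)
  qed
  have e1: "(\<Sum>i\<in>S. \<Sum>l\<in>S. A i l * y i * y l) =
     (A j j * t * t + (\<Sum>l\<in>S0. A j l * t * x l)) + (\<Sum>i\<in>S0. A i j * x i * t + (\<Sum>l\<in>S0. A i l * x i * x l))"
  proof -
    have "(\<Sum>i\<in>S. \<Sum>l\<in>S. A i l * y i * y l) = (\<Sum>l\<in>S. A j l * y j * y l) + (\<Sum>i\<in>S0. \<Sum>l\<in>S. A i l * y i * y l)"
      unfolding S(1) by (rule sum.insert[OF S(3) S(2)])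
    also have "(\<Sum>i\<in>S0. \<Sum>l\<in>S. A i l * y i * y l) = (\<Sum>i\<in>S0. A i j * x i * t + (\<Sum>l\<in>S0. A i l * x i * x l))"
      by (rule sum.cong[OF refl], subst i1, simp add: y0)
    also have "(\<Sum>l\<in>S. A j l * y j * y l) = A j j * t * t + (\<Sum>l\<in>S0. A j l * t * x l)"
      using i1[of j] by (simp add: yj)
    finally show ?thesis .
  qed
  have e2: "(\<Sum>i\<in>S0. A i j * x i * t + (\<Sum>l\<in>S0. A i l * x i * x l)) =
      (\<Sum>l\<in>S0. A j l * t * x l) + (\<Sum>i\<in>S0. \<Sum>l\<in>S0. A i l * x i * x l)"
  proof -
    have "(\<Sum>i\<in>S0. A i j * x i * t) = (\<Sum>l\<in>S0. A j l * t * x l)"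
    proof (rule sum.cong[OF refl])
      fix l assume l: "l \<in> S0"
      have "A l j = A j l" using assms(2,3) l S0_def by blast
      then show "A l j * x l * t = A j l * t * x l" by simp
    qed
    then show ?thesis by (simp only: sum.distrib)
  qed
  have e3: "(\<Sum>i\<in>S. b i * y i) = b j * t + (\<Sum>i\<in>S0. b i * x i)"
  proof -
    have "(\<Sum>i\<in>S0. b i * y i) = (\<Sum>i\<in>S0. b i * x i)" by (rule sum.cong[OF refl]) (simp add: y0)
    then show ?thesis unfolding S(1) sum.insert[OF S(3) S(2)] yj by simp
  qed
  have e4: "(\<Sum>l\<in>S0. A j l * t * x l) = t * (\<Sum>l\<in>S0. A j l * x l)"
    by (simp add: sum_distrib_left mult_ac)
  show ?thesis unfolding qf_def y_def[symmetric] e3 e1 e2 S0_def[symmetric] e4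
    by (simp add: power2_eq_square algebra_simps)
qed

lemma gauss1:
  fixes a \<beta> \<gamma> :: real assumes "a < 0"
  shows "(\<integral>\<^sup>+t. ennreal (exp (a * t\<^sup>2 + \<beta> * t + \<gamma>)) \<partial>lborel) =
     ennreal (exp (\<gamma> - \<beta>\<^sup>2/(4*a)) * sqrt (pi/(-a)))"
proof -
  define \<sigma> where "\<sigma> = sqrt (-1/(2*a))"
  define \<mu> where "\<mu> = -\<beta>/(2*a)"
  have s2: "\<sigma>\<^sup>2 = -1/(2*a)" using assms by (simp add: \<sigma>_def)
  have sq: "sqrt (2*pi*\<sigma>\<^sup>2) = sqrt (pi/(-a))" using s2 by (simp add: field_simps)
  have sp: "sqrt (pi/(-a)) > 0" using assms by (intro real_sqrt_gt_zero divide_pos_pos) auto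
  have pt: "exp (a * t\<^sup>2 + \<beta> * t + \<gamma>) = (exp (\<gamma> - \<beta>\<^sup>2/(4*a)) * sqrt (pi/(-a))) * normal_density \<mu> \<sigma> t" for t
  proof -
    have "-(t - \<mu>)\<^sup>2/ (2 * \<sigma>\<^sup>2) = a * t\<^sup>2 + \<beta> * t + \<beta>\<^sup>2/(4*a)"
      using assms unfolding s2 \<mu>_def by (simp add: field_simps power2_eq_square)
    then have "exp (a * t\<^sup>2 + \<beta> * t + \<gamma>) = exp (\<gamma> - \<beta>\<^sup>2/(4*a)) * exp (-(t - \<mu>)\<^sup>2/ (2 * \<sigma>\<^sup>2))"
      by (simp add: exp_add[symmetric])
    moreover have "a \<noteq> 0" using assms by simp
    ultimately show ?thesis unfolding normal_density_def sq using sp by simp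
  qed
  have "(\<integral>\<^sup>+t. ennreal (normal_density \<mu> \<sigma> t) \<partial>lborel) = 1"
  proof -
    have "\<sigma> > 0" using assms by (simp add: \<sigma>_def)
    then show ?thesis
      using nn_integral_eq_integral[OF integrable_normal_density[where \<mu>=\<mu> and \<sigma>=\<sigma>]]
        integral_normal_density[where \<mu>=\<mu> and \<sigma>=\<sigma>] by simp
  qed
  moreover
  define K where "K = exp (\<gamma> - \<beta>\<^sup>2/(4*a)) * sqrt (pi/(-a))"
  have K: "K \<ge> 0" using sp by (simp add: K_def)
  have eq: "(\<lambda>t. ennreal (K * normal_density \<mu> \<sigma> t)) = (\<lambda>t. ennreal K * ennreal (normal_density \<mu> \<sigma> t))"
    using K by (auto simp: ennreal_mult)
  have m: "(\<lambda>t. ennreal (normal_density \<mu> \<sigma> t)) \<in> borel_measurable lborel" by measurable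
  ultimately show ?thesis unfolding pt K_def[symmetric] eq
    by (simp add: nn_integral_cmult[OF m])
qed

lemma quad_identity:
  fixes a :: real
  shows "(\<Sum>i\<in>S0. \<Sum>l\<in>S0. (A i l - A j i * A j l / a) * x i * x l) =
         (\<Sum>i\<in>S0. \<Sum>l\<in>S0. A i l * x i * x l) - (\<Sum>l\<in>S0. A j l * x l)\<^sup>2 / a"
proof -
  have "(\<Sum>i\<in>S0. \<Sum>l\<in>S0. (A i l - A j i * A j l / a) * x i * x l) =
        (\<Sum>i\<in>S0. \<Sum>l\<in>S0. A i l * x i * x l - (A j i * x i) * (A j l * x l) / a)"
    by (intro sum.cong refl) (simp add: algebra_simps)
  also have "\<dots> = (\<Sum>i\<in>S0. \<Sum>l\<in>S0. A i l * x i * x l) - (\<Sum>i\<in>S0. \<Sum>l\<in>S0. (A j i * x i) * (A j l * x l)) / a"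
    by (simp add: sum_subtractf sum_divide_distrib)
  also have "(\<Sum>i\<in>S0. \<Sum>l\<in>S0. (A j i * x i) * (A j l * x l)) = (\<Sum>l\<in>S0. A j l * x l)\<^sup>2"
    by (simp add: power2_eq_square sum_product)
  finally show ?thesis .
qed

lemma lin_identity:
  fixes a :: real
  shows "(\<Sum>l\<in>S0. (b l - b j * A j l / a) * x l) = (\<Sum>l\<in>S0. b l * x l) - b j * (\<Sum>l\<in>S0. A j l * x l) / a"
proof -
  have "(\<Sum>l\<in>S0. (b l - b j * A j l / a) * x l) = (\<Sum>l\<in>S0. b l * x l - b j * (A j l * x l) / a)"
    by (intro sum.cong refl) (simp add: algebra_simps)
  also have "\<dots> = (\<Sum>l\<in>S0. b l * x l) - b j * (\<Sum>l\<in>S0. A j l * x l) / a"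
    by (simp add: sum_subtractf sum_divide_distrib sum_distrib_left)
  finally show ?thesis .
qed

lemma negdef_diag:
  assumes "negdef S A" "j \<in> S" "finite S"
  shows "A j j < 0"
proof -
  define v where "v = (\<lambda>i. if i = j then 1 else (0::real))"
  have "v j \<noteq> 0" by (simp add: v_def)
  then have "\<exists>i\<in>S. v i \<noteq> 0" using assms(2) by blast
  then have lt: "(\<Sum>i\<in>S. \<Sum>l\<in>S. A i l * v i * v l) < 0"
    using assms(1) unfolding negdef_def by blast
  have r: "(\<Sum>l\<in>S. A i l * v i * v l) = A i j * v i" for i
  proof -
    have "(\<Sum>l\<in>S. A i l * v i * v l) = (\<Sum>l\<in>S. if l = j then A i j * v i else 0)"
      by (rule sum.cong[OF refl]) (simp add: v_def)
    also have "\<dots> = A i j * v i" using assms(2,3) by (simp add: sum.delta')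
    finally show ?thesis .
  qed
  have "(\<Sum>i\<in>S. A i j * v i) = (\<Sum>i\<in>S. if i = j then A j j else 0)"
    by (rule sum.cong[OF refl]) (simp add: v_def)
  also have "\<dots> = A j j" using assms(2,3) by (simp add: sum.delta')
  finally show ?thesis using lt r by simp
qed

lemma qf_zero: "qf S A (\<lambda>_. 0) 0 v = (\<Sum>i\<in>S. \<Sum>l\<in>S. A i l * v i * v l)"
  by (simp add: qf_def)

lemma marg1:
  assumes fin: "finite S" and jS: "j \<in> S" and nd: "negdef S A"
  shows "\<exists>A' b' c'. negdef (S-{j}) A' \<and>
     (\<forall>x. (\<integral>\<^sup>+t. ennreal (exp (qf S A b c (x(j:=t)))) \<partial>lborel) = ennreal (exp (qf (S-{j}) A' b' c' x)))"
proof -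
  define S0 where "S0 = S - {j}"
  define a where "a = A j j"
  have a: "a < 0" using negdef_diag[OF nd jS fin] by (simp add: a_def)
  have sym: "\<forall>i\<in>S. \<forall>l\<in>S. A i l = A l i" using nd by (simp add: negdef_def)
  define A' where "A' = (\<lambda>i l. A i l - A j i * A j l / a)"
  define b' where "b' = (\<lambda>l. b l - b j * A j l / a)"
  define c' where "c' = c - (b j)\<^sup>2/(4*a) + ln (sqrt (pi/(-a)))"
  have sp: "sqrt (pi/(-a)) > 0" using a by (intro real_sqrt_gt_zero divide_pos_pos) auto
  have key: "qf S0 A' b' c' x = qf S0 A b c x - (2*(\<Sum>l\<in>S0. A j l * x l) + b j)\<^sup>2/(4*a) + ln (sqrt (pi/(-a)))" for x
  proof -
    define Q where "Q = (\<Sum>i\<in>S0. \<Sum>l\<in>S0. A i l * x i * x l)"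
    define L where "L = (\<Sum>l\<in>S0. b l * x l)"
    define sx where "sx = (\<Sum>l\<in>S0. A j l * x l)"
    have E1: "qf S0 A' b' c' x = (Q - sx\<^sup>2 / a) + (L - b j * sx / a) + c'"
      unfolding qf_def A'_def b'_def Q_def L_def sx_def
      by (simp only: quad_identity lin_identity)
    have E2: "qf S0 A b c x = Q + L + c" by (simp add: qf_def Q_def L_def)
    show ?thesis unfolding sx_def[symmetric] using a
      by (simp only: E1 E2) (simp add: c'_def field_simps power2_eq_square)
  qed
  have neg': "negdef S0 A'"
    unfolding negdef_def
  proof (intro conjI allI impI ballI)
    fix i l assume il: "i \<in> S0" "l \<in> S0"
    then have "i \<in> S" "l \<in> S" by (auto simp: S0_def)
    then have "A i l = A l i" using sym by blast
    then show "A' i l = A' l i" unfolding A'_def by (simp add: mult.commute)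
  next
    fix v :: "nat \<Rightarrow> real" assume "\<exists>i\<in>S0. v i \<noteq> 0"
    then obtain i where i: "i \<in> S0" "v i \<noteq> 0" by blast
    define s where "s = (\<Sum>l\<in>S0. A j l * v l)"
    define w where "w = v(j := -s/a)"
    have "w i \<noteq> 0" using i by (simp add: w_def S0_def)
    moreover have "i \<in> S" using i by (simp add: S0_def)
    ultimately have "qf S A (\<lambda>_. 0) 0 w < 0" using nd unfolding negdef_def qf_zero by blast
    moreover have "qf S A (\<lambda>_. 0) 0 w = a * (-s/a)\<^sup>2 + (2 * s + 0) * (-s/a) + qf S0 A (\<lambda>_. 0) 0 v"
      unfolding w_def using qf_upd[OF fin jS sym, of "\<lambda>_. 0" 0 v "-s/a"]
      by (simp add: a_def s_def S0_def)
    moreover have "(\<Sum>i\<in>S0. \<Sum>l\<in>S0. A' i l * v i * v l) = qf S0 A (\<lambda>_. 0) 0 v - s\<^sup>2/a"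
      unfolding A'_def qf_zero s_def using a by (simp add: quad_identity)
    moreover have "a * (-s/a)\<^sup>2 + (2 * s + 0) * (-s/a) = - s\<^sup>2/a"
      using a by (simp add: field_simps power2_eq_square)
    ultimately show "(\<Sum>i\<in>S0. \<Sum>l\<in>S0. A' i l * v i * v l) < 0" by linarith
  qed
  have "(\<integral>\<^sup>+t. ennreal (exp (qf S A b c (x(j:=t)))) \<partial>lborel) = ennreal (exp (qf S0 A' b' c' x))" for x
  proof -
    have "(\<integral>\<^sup>+t. ennreal (exp (qf S A b c (x(j:=t)))) \<partial>lborel) =
       (\<integral>\<^sup>+t. ennreal (exp (a * t\<^sup>2 + (2*(\<Sum>l\<in>S0. A j l * x l) + b j) * t + qf S0 A b c x)) \<partial>lborel)"
      using qf_upd[OF fin jS sym] by (simp add: a_def S0_def)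
    also have "\<dots> = ennreal (exp (qf S0 A b c x - (2*(\<Sum>l\<in>S0. A j l * x l) + b j)\<^sup>2/(4*a)) * sqrt (pi/(-a)))"
      by (rule gauss1[OF a])
    also have "exp (qf S0 A b c x - (2*(\<Sum>l\<in>S0. A j l * x l) + b j)\<^sup>2/(4*a)) * sqrt (pi/(-a)) = exp (qf S0 A' b' c' x)"
      unfolding key using sp by (simp add: exp_add)
    finally show ?thesis .
  qed
  then show ?thesis using neg' unfolding S0_def by blast
qed

interpretation lbp: product_sigma_finite "\<lambda>_::nat. (lborel::real measure)"
  by unfold_locales

definition mg :: "nat set \<Rightarrow> (nat\<Rightarrow>real) \<Rightarrow> (nat\<Rightarrow>real) \<Rightarrow> (nat\<Rightarrow>real)" where
  "mg T x y = (\<lambda>j. if j \<in> T then y j else x j)"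

lemma meas_qf:
  assumes "\<And>j. j \<in> S \<Longrightarrow> (\<lambda>x. h x j) \<in> borel_measurable M"
  shows "(\<lambda>x. qf S A b c (h x)) \<in> borel_measurable M"
  unfolding qf_def using assms
  by (intro borel_measurable_add borel_measurable_sum borel_measurable_times borel_measurable_const) auto

lemma meas_coord:
  assumes "j \<in> U"
  shows "(\<lambda>y::nat\<Rightarrow>real. y j) \<in> borel_measurable (leb U)"
  using measurable_component_singleton[OF assms, of "\<lambda>_. lborel"] by simp

lemma meas_mg:
  assumes "T \<subseteq> U"
  shows "(\<lambda>y. mg T x y j) \<in> borel_measurable (leb U)"
proof (cases "j \<in> T")
  case True
  then show ?thesis using meas_coord[of j U] assms by (auto simp: mg_def)
next
  case False
  then show ?thesis by (simp add: mg_def)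
qed

lemma meas_eqm:
  assumes "T \<subseteq> U"
  shows "(\<lambda>y. exp (qf S A b c (mg T x y))) \<in> borel_measurable (leb U)"
proof -
  have "(\<lambda>y. qf S A b c (mg T x y)) \<in> borel_measurable (leb U)"
    by (rule meas_qf) (rule meas_mg[OF assms])
  then show ?thesis by (rule measurable_compose) (rule borel_measurable_exp)
qed

lemma meas_eqm_enn:
  assumes "T \<subseteq> U"
  shows "(\<lambda>y. ennreal (exp (qf S A b c (mg T x y)))) \<in> borel_measurable (leb U)"
  using meas_eqm[OF assms] by (rule measurable_compose) (rule measurable_ennreal)

lemma mg_upd: "k \<notin> T \<Longrightarrow> mg (insert k T) x (y(k:=t)) = (mg T x y)(k:=t)"
  by (auto simp: mg_def)

lemma margT:
  assumes "finite S" "T \<subseteq> S" "negdef S A"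
  shows "\<exists>A' b' c'. negdef (S-T) A' \<and>
    (\<forall>x. (\<integral>\<^sup>+y. ennreal (exp (qf S A b c (mg T x y))) \<partial>leb T) = ennreal (exp (qf (S-T) A' b' c' x)))"
proof -
  have "finite T" using assms finite_subset by blast
  then show ?thesis using assms
  proof (induction T arbitrary: S A b c rule: finite_induct)
    case empty
    have e: "(\<integral>\<^sup>+y. ennreal (exp (qf S A b c (mg {} x y))) \<partial>leb {}) = ennreal (exp (qf (S-{}) A b c x))" for x
      by (simp add: mg_def nn_integral_const space_PiM_empty)
    have "negdef (S-{}) A" using empty by simp
    then show ?case using e by (intro exI[of _ A] exI[of _ b] exI[of _ c]) simp
  next
    case (insert k T)
    have kS: "k \<in> S" and TS: "T \<subseteq> S - {k}" using insert by auto
    obtain A1 b1 c1 where n1: "negdef (S-{k}) A1" and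
      h1: "\<And>z. (\<integral>\<^sup>+t. ennreal (exp (qf S A b c (z(k:=t)))) \<partial>lborel) = ennreal (exp (qf (S-{k}) A1 b1 c1 z))"
      using marg1[OF insert.prems(1) kS insert.prems(3), of b c] by blast
    obtain A2 b2 c2 where n2: "negdef (S-{k}-T) A2" and
      h2: "\<And>x. (\<integral>\<^sup>+y. ennreal (exp (qf (S-{k}) A1 b1 c1 (mg T x y))) \<partial>leb T) = ennreal (exp (qf (S-{k}-T) A2 b2 c2 x))"
      using insert.IH[of "S-{k}" A1 b1 c1] insert.prems(1) TS n1 by blast
    have eqS: "S - {k} - T = S - insert k T" by auto
    have "(\<integral>\<^sup>+y. ennreal (exp (qf S A b c (mg (insert k T) x y))) \<partial>leb (insert k T)) = ennreal (exp (qf (S - insert k T) A2 b2 c2 x))" for x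
    proof -
      have m: "(\<lambda>y. ennreal (exp (qf S A b c (mg (insert k T) x y)))) \<in> borel_measurable (leb (insert k T))"
        by (rule meas_eqm_enn) simp
      have "(\<integral>\<^sup>+y. ennreal (exp (qf S A b c (mg (insert k T) x y))) \<partial>leb (insert k T)) =
         (\<integral>\<^sup>+y. (\<integral>\<^sup>+t. ennreal (exp (qf S A b c (mg (insert k T) x (y(k:=t))))) \<partial>lborel) \<partial>leb T)"
        by (rule lbp.product_nn_integral_insert[OF insert.hyps m])
      also have "\<dots> = (\<integral>\<^sup>+y. ennreal (exp (qf (S-{k}) A1 b1 c1 (mg T x y))) \<partial>leb T)"
        by (simp only: mg_upd[OF insert.hyps(2)] h1)
      also have "\<dots> = ennreal (exp (qf (S - insert k T) A2 b2 c2 x))"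
        using h2 eqS by simp
      finally show ?thesis .
    qed
    then show ?case using n2 eqS by auto
  qed
qed

lemma qf_cong: "(\<forall>j\<in>S. x j = y j) \<Longrightarrow> qf S A b c x = qf S A b c y"
  unfolding qf_def by (intro arg_cong2[where f="(+)"] sum.cong refl) auto

lemma mvn_class:
  assumes "is_mvn_density n f"
  shows "\<exists>A b c. negdef {..<n} A \<and> f = (\<lambda>x. exp (qf {..<n} A b c x)) \<and> (\<integral>x. f x \<partial>leb {..<n}) = 1"
proof -
  obtain mu P c0 where sym: "\<forall>i<n. \<forall>j<n. P i j = P j i"
    and pd: "\<forall>v :: nat \<Rightarrow> real. (\<exists>i<n. v i \<noteq> 0) \<longrightarrow> (\<Sum>i<n. \<Sum>j<n. v i * P i j * v j) > 0"
    and c0: "c0 > 0"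
    and fd: "f = (\<lambda>x. c0 * exp (- (1/2) * (\<Sum>i<n. \<Sum>j<n. (x i - mu i) * P i j * (x j - mu j))))"
    and int: "(\<integral>x. f x \<partial>leb {..<n}) = 1"
    using assms unfolding is_mvn_density_def by blast
  define A where "A = (\<lambda>i j. -(1/2) * P i j)"
  define b where "b = (\<lambda>i. \<Sum>j<n. P i j * mu j)"
  define c where "c = ln c0 - (1/2) * (\<Sum>i<n. \<Sum>j<n. mu i * P i j * mu j)"
  have key: "-(1/2) * (\<Sum>i<n. \<Sum>j<n. (x i - mu i) * P i j * (x j - mu j)) = qf {..<n} A b c x - ln c0" for x
  proof -
    define Q where "Q = (\<Sum>i<n. \<Sum>j<n. x i * P i j * x j)"
    define L where "L = (\<Sum>i<n. \<Sum>j<n. x i * P i j * mu j)"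
    define M where "M = (\<Sum>i<n. \<Sum>j<n. mu i * P i j * mu j)"
    have cross: "(\<Sum>i<n. \<Sum>j<n. mu i * P i j * x j) = L"
    proof -
      have "(\<Sum>i<n. \<Sum>j<n. mu i * P i j * x j) = (\<Sum>j<n. \<Sum>i<n. mu i * P i j * x j)"
        by (rule sum.swap)
      also have "\<dots> = L" unfolding L_def
      proof (rule sum.cong[OF refl], rule sum.cong[OF refl])
        fix j i assume "j \<in> {..<n}" "i \<in> {..<n}"
        then have "P i j = P j i" using sym by auto
        then show "mu i * P i j * x j = x j * P j i * mu i" by simp
      qed
      finally show ?thesis .
    qed
    have "(\<Sum>i<n. \<Sum>j<n. (x i - mu i) * P i j * (x j - mu j)) =
        (\<Sum>i<n. \<Sum>j<n. x i * P i j * x j - x i * P i j * mu j - mu i * P i j * x j + mu i * P i j * mu j)"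
      by (intro sum.cong refl) (simp add: algebra_simps)
    also have "\<dots> = Q - L - (\<Sum>i<n. \<Sum>j<n. mu i * P i j * x j) + M"
      unfolding Q_def L_def M_def by (simp only: sum.distrib sum_subtractf)
    finally have e1: "(\<Sum>i<n. \<Sum>j<n. (x i - mu i) * P i j * (x j - mu j)) = Q - 2 * L + M"
      using cross by simp
    have e2: "(\<Sum>i\<in>{..<n}. \<Sum>l\<in>{..<n}. A i l * x i * x l) = -(1/2) * Q"
      unfolding Q_def A_def by (simp add: sum_distrib_left mult_ac)
    have e3: "(\<Sum>i\<in>{..<n}. b i * x i) = L"
      unfolding L_def b_def by (simp add: sum_distrib_left mult_ac)
    show ?thesis unfolding e1 qf_def e2 e3 c_def M_def[symmetric] by (simp add: algebra_simps)
  qed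
  have f: "f = (\<lambda>x. exp (qf {..<n} A b c x))"
    unfolding fd key using c0 by (simp add: exp_diff)
  have "negdef {..<n} A"
    unfolding negdef_def
  proof (intro conjI allI impI ballI)
    fix i l assume "i \<in> {..<n}" "l \<in> {..<n}"
    then show "A i l = A l i" using sym by (auto simp: A_def)
  next
    fix v :: "nat \<Rightarrow> real" assume "\<exists>i\<in>{..<n}. v i \<noteq> 0"
    then have "(\<Sum>i<n. \<Sum>j<n. v i * P i j * v j) > 0" using pd by auto
    moreover have "(\<Sum>i\<in>{..<n}. \<Sum>l\<in>{..<n}. A i l * v i * v l) = -(1/2) * (\<Sum>i<n. \<Sum>j<n. v i * P i j * v j)"
      unfolding A_def by (simp add: sum_distrib_left mult_ac)
    ultimately show "(\<Sum>i\<in>{..<n}. \<Sum>l\<in>{..<n}. A i l * v i * v l) < 0" by simp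
  qed
  then show ?thesis using f int by blast
qed

lemma sq_bound: "(t::real)\<^sup>2 \<le> exp (2*t) + exp (-2*t)"
proof -
  have "\<bar>t\<bar> \<le> exp \<bar>t\<bar>" using exp_ge_add_one_self[of "\<bar>t\<bar>"] by linarith
  then have "\<bar>t\<bar>\<^sup>2 \<le> (exp \<bar>t\<bar>)\<^sup>2" by (intro power_mono) auto
  also have "(exp \<bar>t\<bar>)\<^sup>2 = exp (2 * \<bar>t\<bar>)" by (simp add: power2_eq_square exp_add[symmetric])
  also have "\<dots> \<le> exp (2*t) + exp (-2*t)" by (cases "t \<ge> 0") auto
  finally show ?thesis by simp
qed

lemma abs_bound: "\<bar>t::real\<bar> \<le> exp t + exp (-t)"
proof -
  have "\<bar>t\<bar> \<le> exp \<bar>t\<bar>" using exp_ge_add_one_self[of "\<bar>t\<bar>"] by linarith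
  also have "\<dots> \<le> exp t + exp (-t)" by (cases "t \<ge> 0") auto
  finally show ?thesis .
qed

lemma prod_bound: "\<bar>(s::real) * t\<bar> \<le> s\<^sup>2 + t\<^sup>2"
proof -
  have "0 \<le> (\<bar>s\<bar> - \<bar>t\<bar>)\<^sup>2" by simp
  then have "2 * (\<bar>s\<bar> * \<bar>t\<bar>) \<le> s\<^sup>2 + t\<^sup>2" by (simp add: power2_eq_square algebra_simps)
  moreover have "\<bar>s\<bar> * \<bar>t\<bar> \<ge> 0" by simp
  ultimately have "\<bar>s\<bar> * \<bar>t\<bar> \<le> s\<^sup>2 + t\<^sup>2" by linarith
  then show ?thesis by (simp add: abs_mult)
qed

locale gm =
  fixes n :: nat and f :: "(nat \<Rightarrow> real) \<Rightarrow> real" and A :: "nat \<Rightarrow> nat \<Rightarrow> real" and b :: "nat \<Rightarrow> real" and c :: real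
  assumes nd: "negdef {..<n} A"
    and fdef: "f = (\<lambda>x. exp (qf {..<n} A b c x))"
    and fint: "(\<integral>x. f x \<partial>leb {..<n}) = 1"
begin

lemma f_pos: "f x > 0"
  by (simp add: fdef)

lemma f_meas:
  assumes "\<And>j. j < n \<Longrightarrow> (\<lambda>y. h y j) \<in> borel_measurable M"
  shows "(\<lambda>y. f (h y)) \<in> borel_measurable M"
proof -
  have "(\<lambda>y. qf {..<n} A b c (h y)) \<in> borel_measurable M" by (rule meas_qf) (use assms in auto)
  then show ?thesis unfolding fdef by (rule measurable_compose) (rule borel_measurable_exp)
qed

lemma f_meas_leb: "f \<in> borel_measurable (leb {..<n})"
  using f_meas[of "\<lambda>y. y" "leb {..<n}"] meas_coord by auto

lemma marg_hb:
  assumes "S \<subseteq> {..<n}"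
  shows "\<exists>A' b' c'. negdef S A' \<and> (\<forall>x. has_bochner_integral (leb ({..<n}-S))
            (\<lambda>y. f (\<lambda>j. if j\<in>S then x j else y j)) (exp (qf S A' b' c' x)))"
proof -
  define T where "T = {..<n} - S"
  have TS: "T \<subseteq> {..<n}" and ST: "{..<n} - T = S" using assms by (auto simp: T_def)
  obtain A' b' c' where n': "negdef ({..<n} - T) A'" and
    h: "\<And>x. (\<integral>\<^sup>+y. ennreal (exp (qf {..<n} A b c (mg T x y))) \<partial>leb T) = ennreal (exp (qf ({..<n}-T) A' b' c' x))"
    using margT[OF _ TS nd, of b c] by blast
  have fe: "f (\<lambda>j. if j\<in>S then x j else y j) = exp (qf {..<n} A b c (mg T x y))" for x y
    unfolding fdef by (rule arg_cong[where f=exp], rule qf_cong) (auto simp: mg_def T_def)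
  have "has_bochner_integral (leb T) (\<lambda>y. f (\<lambda>j. if j\<in>S then x j else y j)) (exp (qf S A' b' c' x))" for x
    unfolding fe using h[of x] unfolding ST
    by (intro has_bochner_integral_nn_integral meas_eqm) auto
  then show ?thesis using n' ST unfolding T_def by auto
qed

lemma marg_exp:
  assumes "S \<subseteq> {..<n}"
  shows "\<exists>A' b' c'. marg n f S = (\<lambda>x. exp (qf S A' b' c' x))"
proof -
  obtain A' b' c' where h: "\<And>x. has_bochner_integral (leb ({..<n}-S))
            (\<lambda>y. f (\<lambda>j. if j\<in>S then x j else y j)) (exp (qf S A' b' c' x))"
    using marg_hb[OF assms] by blast
  have "marg n f S x = exp (qf S A' b' c' x)" for x
    unfolding marg_def using h[of x] by (simp add: has_bochner_integral_integral_eq)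
  then show ?thesis by blast
qed

lemma marg_pos: "S \<subseteq> {..<n} \<Longrightarrow> marg n f S x > 0"
proof -
  assume "S \<subseteq> {..<n}"
  then obtain A' b' c' where e: "marg n f S = (\<lambda>x. exp (qf S A' b' c' x))" using marg_exp by blast
  show ?thesis unfolding e by simp
qed

lemma marg_int:
  assumes "S \<subseteq> {..<n}"
  shows "integrable (leb ({..<n}-S)) (\<lambda>y. f (\<lambda>j. if j\<in>S then x j else y j))"
proof -
  obtain A' b' c' where h: "\<And>x. has_bochner_integral (leb ({..<n}-S))
            (\<lambda>y. f (\<lambda>j. if j\<in>S then x j else y j)) (exp (qf S A' b' c' x))"
    using marg_hb[OF assms] by blast
  show ?thesis using h[of x] by (rule integrable.intros)
qed

lemma marg_nn:
  assumes "S \<subseteq> {..<n}"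
  shows "(\<integral>\<^sup>+y. ennreal (f (\<lambda>j. if j\<in>S then x j else y j)) \<partial>leb ({..<n}-S)) = ennreal (marg n f S x)"
  unfolding marg_def using marg_int[OF assms, of x]
  by (intro nn_integral_eq_integral) (auto simp: less_imp_le f_pos)

lemma marg_dep: "(\<forall>j\<in>S. x j = y j) \<Longrightarrow> marg n f S x = marg n f S y"
proof -
  assume h: "\<forall>j\<in>S. x j = y j"
  have "\<And>z. (\<lambda>j. if j\<in>S then x j else z j) = (\<lambda>j. if j\<in>S then y j else z j)"
    using h by (intro ext) simp
  then show ?thesis unfolding marg_def by simp
qed

lemma marg_meas:
  assumes "S \<subseteq> {..<n}" "\<And>j. j \<in> S \<Longrightarrow> (\<lambda>y. h y j) \<in> borel_measurable M"
  shows "(\<lambda>y. marg n f S (h y)) \<in> borel_measurable M"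
proof -
  obtain A' b' c' where e: "marg n f S = (\<lambda>x. exp (qf S A' b' c' x))" using marg_exp[OF assms(1)] by blast
  have "(\<lambda>y. qf S A' b' c' (h y)) \<in> borel_measurable M" by (rule meas_qf) (use assms in auto)
  then show ?thesis unfolding e by (rule measurable_compose) (rule borel_measurable_exp)
qed

lemma marg_ln:
  assumes "S \<subseteq> {..<n}"
  shows "\<exists>A' b' c'. \<forall>x. ln (marg n f S x) = qf S A' b' c' x"
proof -
  obtain A' b' c' where e: "marg n f S = (\<lambda>x. exp (qf S A' b' c' x))" using marg_exp[OF assms] by blast
  have "\<forall>x. ln (marg n f S x) = qf S A' b' c' x" unfolding e by simp
  then show ?thesis by blast
qed

subsection \<open>Integrability of f times quadratic polynomials\<close>

lemma int_lin: "integrable (leb {..<n}) (\<lambda>x. exp (qf {..<n} A b c x + (\<Sum>k\<in>{..<n}. d k * x k)))"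
proof -
  have e: "qf {..<n} A b c x + (\<Sum>k\<in>{..<n}. d k * x k) = qf {..<n} A (\<lambda>k. b k + d k) c x" for x
    unfolding qf_def by (simp add: sum.distrib distrib_right)
  obtain A' b' c' where
    h: "\<And>x. (\<integral>\<^sup>+y. ennreal (exp (qf {..<n} A (\<lambda>k. b k + d k) c (mg {..<n} x y))) \<partial>leb {..<n}) = ennreal (exp (qf ({..<n}-{..<n}) A' b' c' x))"
    using margT[OF _ order_refl nd, of "\<lambda>k. b k + d k" c] by blast
  have q: "qf {..<n} A (\<lambda>k. b k + d k) c (mg {..<n} x y) = qf {..<n} A (\<lambda>k. b k + d k) c y" for x y
    by (rule qf_cong) (simp add: mg_def)
  have "(\<integral>\<^sup>+y. ennreal (exp (qf {..<n} A (\<lambda>k. b k + d k) c y)) \<partial>leb {..<n}) < \<infinity>"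
    using h[of "\<lambda>_. 0"] unfolding q by simp
  moreover have "(\<lambda>y. exp (qf {..<n} A (\<lambda>k. b k + d k) c y)) \<in> borel_measurable (leb {..<n})"
    using meas_eqm[of "{..<n}" "{..<n}" "{..<n}" A "\<lambda>k. b k + d k" c "\<lambda>_. 0"] unfolding q by simp
  ultimately show ?thesis unfolding e by (intro integrableI_nonneg) auto
qed

lemma int_coord:
  assumes "i < n"
  shows "integrable (leb {..<n}) (\<lambda>x. f x * exp (s * x i))"
proof -
  have "(\<Sum>k\<in>{..<n}. (if k = i then s else 0) * x k) = s * x i" for x
  proof -
    have "(\<Sum>k\<in>{..<n}. (if k = i then s else 0) * x k) = (\<Sum>k\<in>{..<n}. if k = i then s * x i else 0)"
      by (rule sum.cong) auto
    also have "\<dots> = s * x i" using assms by (simp add: sum.delta)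
    finally show ?thesis .
  qed
  then have "(\<lambda>x. exp (qf {..<n} A b c x + (\<Sum>k\<in>{..<n}. (if k = i then s else 0) * x k))) = (\<lambda>x. f x * exp (s * x i))"
    by (simp add: fdef exp_add)
  then show ?thesis using int_lin[of "\<lambda>k. if k = i then s else 0"] by simp
qed

lemma int_f: "integrable (leb {..<n}) f"
proof -
  have "(\<lambda>x. f x * exp (0 * x 0)) = f" by simp
  then show ?thesis using int_lin[of "\<lambda>_. 0"] by (simp add: fdef)
qed

lemma coord_meas: "j < n \<Longrightarrow> (\<lambda>x. x j) \<in> borel_measurable (leb {..<n})"
  using meas_coord[of j "{..<n}"] by simp

lemma int_xx:
  assumes "i < n" "l < n"
  shows "integrable (leb {..<n}) (\<lambda>x. f x * (x i * x l))"
proof -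
  have i1: "integrable (leb {..<n}) (\<lambda>x. f x * exp (2 * x i) + f x * exp (-2 * x i) + f x * exp (2 * x l) + f x * exp (-2 * x l))"
    using int_coord[OF assms(1), of 2] int_coord[OF assms(1), of "-2"] int_coord[OF assms(2), of 2] int_coord[OF assms(2), of "-2"]
    by (intro Bochner_Integration.integrable_add) assumption+
  have m: "(\<lambda>x. f x * (x i * x l)) \<in> borel_measurable (leb {..<n})"
    using f_meas_leb coord_meas assms by measurable
  have ae: "AE x in leb {..<n}. norm (f x * (x i * x l)) \<le> norm (f x * exp (2 * x i) + f x * exp (-2 * x i) + f x * exp (2 * x l) + f x * exp (-2 * x l))"
  proof (rule AE_I2)
    fix x
    have fp: "f x > 0" by (rule f_pos)
    have "\<bar>x i * x l\<bar> \<le> exp (2 * x i) + exp (-2 * x i) + exp (2 * x l) + exp (-2 * x l)"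
      using prod_bound[of "x i" "x l"] sq_bound[of "x i"] sq_bound[of "x l"] by linarith
    then have "f x * \<bar>x i * x l\<bar> \<le> f x * (exp (2 * x i) + exp (-2 * x i) + exp (2 * x l) + exp (-2 * x l))"
      using fp by (intro mult_left_mono) auto
    then show "norm (f x * (x i * x l)) \<le> norm (f x * exp (2 * x i) + f x * exp (-2 * x i) + f x * exp (2 * x l) + f x * exp (-2 * x l))"
      using fp by (simp add: abs_mult algebra_simps)
  qed
  show ?thesis by (rule Bochner_Integration.integrable_bound[OF i1 m ae])
qed

lemma int_x:
  assumes "i < n"
  shows "integrable (leb {..<n}) (\<lambda>x. f x * x i)"
proof -
  have i1: "integrable (leb {..<n}) (\<lambda>x. f x * exp (1 * x i) + f x * exp (-1 * x i))"
    using int_coord[OF assms(1), of 1] int_coord[OF assms(1), of "-1"]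
    by (intro Bochner_Integration.integrable_add) assumption+
  have m: "(\<lambda>x. f x * x i) \<in> borel_measurable (leb {..<n})"
    using f_meas_leb coord_meas assms by measurable
  have ae: "AE x in leb {..<n}. norm (f x * x i) \<le> norm (f x * exp (1 * x i) + f x * exp (-1 * x i))"
  proof (rule AE_I2)
    fix x
    have fp: "f x > 0" by (rule f_pos)
    have "f x * \<bar>x i\<bar> \<le> f x * (exp (x i) + exp (- x i))"
      using fp abs_bound[of "x i"] by (intro mult_left_mono) auto
    then show "norm (f x * x i) \<le> norm (f x * exp (1 * x i) + f x * exp (-1 * x i))"
      using fp by (simp add: abs_mult algebra_simps)
  qed
  show ?thesis by (rule Bochner_Integration.integrable_bound[OF i1 m ae])
qed

lemma int_qf:
  assumes "U \<subseteq> {..<n}"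
  shows "integrable (leb {..<n}) (\<lambda>x. f x * qf U A2 b2 c2 x)"
proof -
  have fin: "finite U" using assms finite_subset by blast
  have e: "(\<lambda>x. f x * qf U A2 b2 c2 x) = (\<lambda>x. (\<Sum>i\<in>U. \<Sum>l\<in>U. A2 i l * (f x * (x i * x l))) + (\<Sum>i\<in>U. b2 i * (f x * x i)) + c2 * f x)"
    unfolding qf_def by (simp add: algebra_simps sum_distrib_left)
  have U: "\<And>i. i \<in> U \<Longrightarrow> i < n" using assms by auto
  show ?thesis unfolding e using U int_xx int_x int_f
    by (intro Bochner_Integration.integrable_add Bochner_Integration.integrable_sum integrable_mult_right) auto
qed

end

context gm begin

lemma f_dep: "(\<forall>j<n. x j = y j) \<Longrightarrow> f x = f y"
  unfolding fdef by (simp add: qf_cong)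

lemma f_sec_meas:
  assumes "S \<subseteq> {..<n}"
  shows "(\<lambda>y. f (\<lambda>j. if j\<in>S then x j else y j)) \<in> borel_measurable (leb ({..<n}-S))"
proof (rule f_meas)
  fix j assume "j < n"
  show "(\<lambda>y. if j \<in> S then x j else y j) \<in> borel_measurable (leb ({..<n}-S))"
  proof (cases "j \<in> S")
    case True then show ?thesis by simp
  next
    case False then show ?thesis using meas_coord[of j "{..<n}-S"] \<open>j < n\<close> by simp
  qed
qed

lemma marg_fold:
  assumes S: "S \<subseteq> {..<n}" and phm: "\<phi> \<in> borel_measurable (leb {..<n})"
    and php: "\<And>x. \<phi> x \<ge> 0" and phd: "\<And>x y. (\<forall>j\<in>S. x j = y j) \<Longrightarrow> \<phi> x = \<phi> y"
  shows "(\<integral>\<^sup>+x. ennreal (f x * \<phi> x) \<partial>leb {..<n}) = (\<integral>\<^sup>+x. ennreal (marg n f S x * \<phi> x) \<partial>leb S)"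
proof -
  define T where "T = {..<n} - S"
  have un: "S \<union> T = {..<n}" and dj: "S \<inter> T = {}" using S by (auto simp: T_def)
  have fS: "finite S" and fT: "finite T" using S finite_subset by (auto simp: T_def)
  have meas: "(\<lambda>x. ennreal (f x * \<phi> x)) \<in> borel_measurable (leb (S \<union> T))"
    unfolding un using f_meas_leb phm by measurable
  have "(\<integral>\<^sup>+x. ennreal (f x * \<phi> x) \<partial>leb {..<n}) =
     (\<integral>\<^sup>+x. (\<integral>\<^sup>+y. ennreal (f (merge S T (x,y)) * \<phi> (merge S T (x,y))) \<partial>leb T) \<partial>leb S)"
    using lbp.product_nn_integral_fold[OF dj fS fT meas] unfolding un by simp
  also have "\<dots> = (\<integral>\<^sup>+x. ennreal (marg n f S x * \<phi> x) \<partial>leb S)"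
  proof (rule nn_integral_cong)
    fix x
    have e1: "f (merge S T (x,y)) = f (\<lambda>j. if j\<in>S then x j else y j)" for y
      by (rule f_dep) (auto simp: merge_def T_def)
    have e2: "\<phi> (merge S T (x,y)) = \<phi> x" for y
      by (rule phd) (auto simp: merge_def)
    have "(\<integral>\<^sup>+y. ennreal (f (merge S T (x,y)) * \<phi> (merge S T (x,y))) \<partial>leb T) =
        (\<integral>\<^sup>+y. ennreal (\<phi> x) * ennreal (f (\<lambda>j. if j\<in>S then x j else y j)) \<partial>leb T)"
      unfolding e1 e2 using php f_pos by (intro nn_integral_cong) (simp add: ennreal_mult' mult.commute)
    also have "\<dots> = ennreal (\<phi> x) * (\<integral>\<^sup>+y. ennreal (f (\<lambda>j. if j\<in>S then x j else y j)) \<partial>leb T)"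
      using measurable_compose[OF f_sec_meas[OF S, of x] measurable_ennreal] unfolding T_def by (rule nn_integral_cmult)
    also have "\<dots> = ennreal (\<phi> x) * ennreal (marg n f S x)"
      using marg_nn[OF S] unfolding T_def by simp
    also have "\<dots> = ennreal (marg n f S x * \<phi> x)"
      using php by (simp add: ennreal_mult' mult.commute)
    finally show "(\<integral>\<^sup>+y. ennreal (f (merge S T (x,y)) * \<phi> (merge S T (x,y))) \<partial>leb T) = ennreal (marg n f S x * \<phi> x)" .
  qed
  finally show ?thesis .
qed

lemma marg_step:
  assumes iH: "i \<notin> H" and sub: "insert i H \<subseteq> {..<n}"
  shows "(\<integral>\<^sup>+t. ennreal (marg n f (insert i H) (x(i:=t))) \<partial>lborel) = ennreal (marg n f H x)"
proof -
  define T where "T = {..<n} - insert i H"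
  have H: "H \<subseteq> {..<n}" using sub by auto
  have NH: "{..<n} - H = insert i T" and iT: "i \<notin> T" and fT: "finite T" using sub iH by (auto simp: T_def)
  have meas: "(\<lambda>y. ennreal (f (\<lambda>j. if j\<in>H then x j else y j))) \<in> borel_measurable (leb (insert i T))"
    using measurable_compose[OF f_sec_meas[OF H, of x] measurable_ennreal] unfolding NH .
  have "ennreal (marg n f H x) = (\<integral>\<^sup>+y. ennreal (f (\<lambda>j. if j\<in>H then x j else y j)) \<partial>leb (insert i T))"
    using marg_nn[OF H, of x] unfolding NH by simp
  also have "\<dots> = (\<integral>\<^sup>+t. (\<integral>\<^sup>+y. ennreal (f (\<lambda>j. if j\<in>H then x j else (y(i:=t)) j)) \<partial>leb T) \<partial>lborel)"
    by (rule lbp.product_nn_integral_insert_rev[OF fT iT meas])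
  also have "\<dots> = (\<integral>\<^sup>+t. ennreal (marg n f (insert i H) (x(i:=t))) \<partial>lborel)"
  proof (rule nn_integral_cong)
    fix t
    have e: "(\<lambda>j. if j\<in>H then x j else (y(i:=t)) j) = (\<lambda>j. if j\<in>insert i H then (x(i:=t)) j else y j)" for y
      using iH by (intro ext) auto
    show "(\<integral>\<^sup>+y. ennreal (f (\<lambda>j. if j\<in>H then x j else (y(i:=t)) j)) \<partial>leb T) = ennreal (marg n f (insert i H) (x(i:=t)))"
      unfolding e using marg_nn[OF sub, of "x(i:=t)"] unfolding T_def by simp
  qed
  finally show ?thesis by simp
qed

end

context gm begin

lemma cond_pos:
  assumes "S \<subseteq> {..<i}" "i < n"
  shows "cond_dens n f S i x > 0"
proof -
  have "insert i S \<subseteq> {..<n}" "S \<subseteq> {..<n}" using assms by auto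
  then show ?thesis unfolding cond_dens_def using marg_pos by (simp add: divide_pos_pos)
qed

lemma cond_dep:
  assumes "\<forall>j\<in>insert i S. x j = y j"
  shows "cond_dens n f S i x = cond_dens n f S i y"
proof -
  have "marg n f (insert i S) x = marg n f (insert i S) y" using assms by (intro marg_dep) auto
  moreover have "marg n f S x = marg n f S y" using assms by (intro marg_dep) auto
  ultimately show ?thesis unfolding cond_dens_def by simp
qed

lemma cond_meas:
  assumes "insert i S \<subseteq> {..<n}" "\<And>j. j \<in> insert i S \<Longrightarrow> (\<lambda>y. h y j) \<in> borel_measurable M"
  shows "(\<lambda>y. cond_dens n f S i (h y)) \<in> borel_measurable M"
proof -
  have "(\<lambda>y. marg n f (insert i S) (h y)) \<in> borel_measurable M" using assms by (intro marg_meas) auto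
  moreover have "(\<lambda>y. marg n f S (h y)) \<in> borel_measurable M" using assms by (intro marg_meas) auto
  ultimately show ?thesis unfolding cond_dens_def by (rule borel_measurable_divide)
qed

lemma int_ln_marg:
  assumes "S \<subseteq> {..<n}"
  shows "integrable (leb {..<n}) (\<lambda>x. f x * ln (marg n f S x))"
proof -
  obtain A' b' c' where e: "\<And>x. ln (marg n f S x) = qf S A' b' c' x" using marg_ln[OF assms] by blast
  show ?thesis unfolding e by (rule int_qf[OF assms])
qed

lemma ln_cond:
  assumes "S \<subseteq> {..<i}" "i < n"
  shows "ln (cond_dens n f S i x) = ln (marg n f (insert i S) x) - ln (marg n f S x)"
proof -
  have "insert i S \<subseteq> {..<n}" "S \<subseteq> {..<n}" using assms by auto
  then have "marg n f (insert i S) x > 0" "marg n f S x > 0" using marg_pos by auto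
  then show ?thesis unfolding cond_dens_def by (simp add: ln_div)
qed

lemma int_ln_cond:
  assumes "S \<subseteq> {..<i}" "i < n"
  shows "integrable (leb {..<n}) (\<lambda>x. f x * ln (cond_dens n f S i x))"
proof -
  have s: "insert i S \<subseteq> {..<n}" "S \<subseteq> {..<n}" using assms by auto
  have e: "(\<lambda>x. f x * ln (cond_dens n f S i x)) = (\<lambda>x. f x * ln (marg n f (insert i S) x) - f x * ln (marg n f S x))"
    unfolding ln_cond[OF assms] by (simp add: right_diff_distrib)
  show ?thesis unfolding e using int_ln_marg[OF s(1)] int_ln_marg[OF s(2)] by (rule Bochner_Integration.integrable_diff)
qed

lemma coord_meas_sub: "S \<subseteq> U \<Longrightarrow> j \<in> S \<Longrightarrow> (\<lambda>y::nat\<Rightarrow>real. y j) \<in> borel_measurable (leb U)"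
  using meas_coord[of j U] by auto

lemma int_f_one: "(\<integral>\<^sup>+x. ennreal (f x) \<partial>leb {..<n}) = 1"
  using nn_integral_eq_integral[OF int_f] fint f_pos by (simp add: less_imp_le)

lemma cond_gain:
  assumes HG: "H \<subseteq> G" and G: "G \<subseteq> {..<i}" and i: "i < n"
  shows "0 \<le> (\<integral>x. f x * (ln (cond_dens n f G i x) - ln (cond_dens n f H i x)) \<partial>leb {..<n})"
proof -
  let ?m = "marg n f"
  define R where "R x = cond_dens n f H i x / cond_dens n f G i x" for x
  have H: "H \<subseteq> {..<i}" using HG G by auto
  have iG: "i \<notin> G" and iH: "i \<notin> H" using G H by auto
  have subs: "insert i G \<subseteq> {..<n}" "G \<subseteq> {..<n}" "insert i H \<subseteq> {..<n}" "H \<subseteq> {..<n}"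
    using G H i by auto
  have fG: "finite G" using G finite_subset by blast
  have Rpos: "R x > 0" for x unfolding R_def using cond_pos[OF G i] cond_pos[OF H i] by simp
  have Rm: "R \<in> borel_measurable (leb U)" if "insert i G \<subseteq> U" for U
  proof -
    have a: "(\<lambda>y. cond_dens n f H i y) \<in> borel_measurable (leb U)"
      using cond_meas[OF subs(3), of "\<lambda>y. y"] coord_meas_sub[of "insert i H" U] that HG by auto
    have b: "(\<lambda>y. cond_dens n f G i y) \<in> borel_measurable (leb U)"
      using cond_meas[OF subs(1), of "\<lambda>y. y"] coord_meas_sub[of "insert i G" U] that by auto
    show ?thesis unfolding R_def[abs_def] using a b by (rule borel_measurable_divide)
  qed
  have Rd: "R x = R y" if "\<forall>j\<in>insert i G. x j = y j" for x y
  proof -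
    have "cond_dens n f H i x = cond_dens n f H i y" using that HG by (intro cond_dep) auto
    moreover have "cond_dens n f G i x = cond_dens n f G i y" using that by (intro cond_dep) auto
    ultimately show ?thesis by (simp add: R_def)
  qed
  have step_b: "?m (insert i G) x * R x = ?m G x * (?m (insert i H) x / ?m H x)" for x
    unfolding R_def cond_dens_def using marg_pos[OF subs(1), of x] marg_pos[OF subs(2), of x] marg_pos[OF subs(3), of x] marg_pos[OF subs(4), of x]
    by (simp add: field_simps)
  have mGm: "(\<lambda>y. ennreal (?m G y * (?m (insert i H) y / ?m H y))) \<in> borel_measurable (leb (insert i G))"
  proof -
    have "(\<lambda>y. ?m G y) \<in> borel_measurable (leb (insert i G))"
      using marg_meas[OF subs(2), of "\<lambda>y. y"] coord_meas_sub[of G "insert i G"] by auto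
    moreover have "(\<lambda>y. ?m (insert i H) y) \<in> borel_measurable (leb (insert i G))"
      using marg_meas[OF subs(3), of "\<lambda>y. y"] coord_meas_sub[of "insert i H" "insert i G"] HG by auto
    moreover have "(\<lambda>y. ?m H y) \<in> borel_measurable (leb (insert i G))"
      using marg_meas[OF subs(4), of "\<lambda>y. y"] coord_meas_sub[of H "insert i G"] HG by auto
    ultimately show ?thesis by measurable
  qed
  have nn1: "(\<integral>\<^sup>+x. ennreal (f x * R x) \<partial>leb {..<n}) = 1"
  proof -
    have "(\<integral>\<^sup>+x. ennreal (f x * R x) \<partial>leb {..<n}) = (\<integral>\<^sup>+x. ennreal (?m (insert i G) x * R x) \<partial>leb (insert i G))"
      using Rpos by (intro marg_fold[OF subs(1) Rm[OF subs(1)] _ Rd]) (auto simp: less_imp_le)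
    also have "\<dots> = (\<integral>\<^sup>+x. ennreal (?m G x * (?m (insert i H) x / ?m H x)) \<partial>leb (insert i G))"
      unfolding step_b ..
    also have "\<dots> = (\<integral>\<^sup>+x. (\<integral>\<^sup>+t. ennreal (?m G (x(i:=t)) * (?m (insert i H) (x(i:=t)) / ?m H (x(i:=t)))) \<partial>lborel) \<partial>leb G)"
      by (rule lbp.product_nn_integral_insert[OF fG iG mGm])
    also have "\<dots> = (\<integral>\<^sup>+x. ennreal (?m G x) \<partial>leb G)"
    proof (rule nn_integral_cong)
      fix x
      have d1: "?m G (x(i:=t)) = ?m G x" for t using iG by (intro marg_dep) auto
      have d2: "?m H (x(i:=t)) = ?m H x" for t using iH by (intro marg_dep) auto
      have pos: "?m G x / ?m H x \<ge> 0" using marg_pos[OF subs(2)] marg_pos[OF subs(4)] by (simp add: less_imp_le)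
      have mt: "(\<lambda>t. ennreal (?m (insert i H) (x(i:=t)))) \<in> borel_measurable lborel"
      proof -
        have "(\<lambda>t. ?m (insert i H) (x(i:=t))) \<in> borel_measurable lborel"
        proof (rule marg_meas[OF subs(3)])
          fix j show "(\<lambda>t. (x(i:=t)) j) \<in> borel_measurable lborel" by (cases "j = i") auto
        qed
        then show ?thesis by measurable
      qed
      have "(\<integral>\<^sup>+t. ennreal (?m G (x(i:=t)) * (?m (insert i H) (x(i:=t)) / ?m H (x(i:=t)))) \<partial>lborel) =
          (\<integral>\<^sup>+t. ennreal (?m G x / ?m H x) * ennreal (?m (insert i H) (x(i:=t))) \<partial>lborel)"
        unfolding d1 d2 using pos marg_pos[OF subs(3)]
        by (intro nn_integral_cong) (simp add: ennreal_mult'[symmetric] less_imp_le)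
      also have "\<dots> = ennreal (?m G x / ?m H x) * ennreal (?m H x)"
        using nn_integral_cmult[OF mt] marg_step[OF iH subs(3)] by simp
      also have "\<dots> = ennreal (?m G x)"
        using pos marg_pos[OF subs(4), of x] by (simp add: ennreal_mult'[symmetric] less_imp_le)
      finally show "(\<integral>\<^sup>+t. ennreal (?m G (x(i:=t)) * (?m (insert i H) (x(i:=t)) / ?m H (x(i:=t)))) \<partial>lborel) = ennreal (?m G x)" .
    qed
    also have "\<dots> = (\<integral>\<^sup>+x. ennreal (?m G x * 1) \<partial>leb G)" by simp
    also have "\<dots> = (\<integral>\<^sup>+x. ennreal (f x * 1) \<partial>leb {..<n})"
      by (rule marg_fold[OF subs(2), symmetric]) auto
    also have "\<dots> = 1" using int_f_one by simp
    finally show ?thesis .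
  qed
  have fRm: "(\<lambda>x. f x * R x) \<in> borel_measurable (leb {..<n})"
    using f_meas_leb Rm[OF subs(1)] by measurable
  have hbR: "has_bochner_integral (leb {..<n}) (\<lambda>x. f x * R x) 1"
    using fRm nn1 f_pos Rpos by (intro has_bochner_integral_nn_integral) (auto simp: less_imp_le)
  have intR: "integrable (leb {..<n}) (\<lambda>x. f x * R x)" using hbR by (rule integrable.intros)
  have intD: "integrable (leb {..<n}) (\<lambda>x. f x * (ln (cond_dens n f G i x) - ln (cond_dens n f H i x)))"
  proof -
    have "(\<lambda>x. f x * (ln (cond_dens n f G i x) - ln (cond_dens n f H i x))) =
        (\<lambda>x. f x * ln (cond_dens n f G i x) - f x * ln (cond_dens n f H i x))"
      by (simp add: right_diff_distrib)
    then show ?thesis using int_ln_cond[OF G i] int_ln_cond[OF H i]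
      by (simp add: Bochner_Integration.integrable_diff)
  qed
  have z: "(\<integral>x. f x - f x * R x \<partial>leb {..<n}) = 0"
    using Bochner_Integration.integral_diff[OF int_f intR] fint has_bochner_integral_integral_eq[OF hbR] by simp
  have le: "(\<integral>x. f x - f x * R x \<partial>leb {..<n}) \<le> (\<integral>x. f x * (ln (cond_dens n f G i x) - ln (cond_dens n f H i x)) \<partial>leb {..<n})"
  proof (rule integral_mono)
    show "integrable (leb {..<n}) (\<lambda>x. f x - f x * R x)" using int_f intR by (rule Bochner_Integration.integrable_diff)
    show "integrable (leb {..<n}) (\<lambda>x. f x * (ln (cond_dens n f G i x) - ln (cond_dens n f H i x)))" by (rule intD)
    fix x
    have cg: "cond_dens n f G i x > 0" and ch: "cond_dens n f H i x > 0" using cond_pos[OF G i] cond_pos[OF H i] by auto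
    have "ln (R x) \<le> R x - 1" using Rpos by (rule ln_le_minus_one)
    moreover have "ln (R x) = ln (cond_dens n f H i x) - ln (cond_dens n f G i x)"
      unfolding R_def using cg ch by (simp add: ln_div)
    ultimately have "1 - R x \<le> ln (cond_dens n f G i x) - ln (cond_dens n f H i x)" by simp
    then have "f x * (1 - R x) \<le> f x * (ln (cond_dens n f G i x) - ln (cond_dens n f H i x))"
      using f_pos by (intro mult_left_mono) (auto simp: less_imp_le)
    then show "f x - f x * R x \<le> f x * (ln (cond_dens n f G i x) - ln (cond_dens n f H i x))"
      by (simp add: right_diff_distrib)
  qed
  show ?thesis using z le by simp
qed

end

context gm begin

lemma vecchia_marg:
  assumes g: "\<forall>i<n. g i \<subseteq> {..<i}" and n1: "n1 \<le> n"
  shows "marg n (vecchia n f g) {..<n1} z = (\<Prod>i<n1. cond_dens n f (g i) i z)"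
proof -
  have gi: "\<And>i. i < n \<Longrightarrow> g i \<subseteq> {..<i}" using g by auto
  define c where "c i x = cond_dens n f (g i) i x" for i x
  define w where "w y = (\<lambda>j. if j \<in> {..<n1} then z j else y j)" for y :: "nat \<Rightarrow> real"
  have cpos: "c i x > 0" if "i < n" for i x
    unfolding c_def using cond_pos[of "g i" i] g that by auto
  have cdep: "c i x = c i y" if "i < n" "\<forall>j\<le>i. x j = y j" for i x y
  proof -
    have "g i \<subseteq> {..<i}" using g that(1) by auto
    then have "\<forall>j\<in>insert i (g i). x j = y j" using that(2) by auto
    then show ?thesis unfolding c_def by (rule cond_dep)
  qed
  have wm: "(\<lambda>y. w y j) \<in> borel_measurable (leb {n1..<k})" if "j < k" for j k
  proof (cases "j < n1")
    case True then show ?thesis by (simp add: w_def)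
  next
    case False
    then have "j \<in> {n1..<k}" using that by auto
    then show ?thesis using meas_coord[of j "{n1..<k}"] False by (simp add: w_def)
  qed
  have cm: "(\<lambda>y. c i (w y)) \<in> borel_measurable (leb {n1..<k})" if "i < k" "k \<le> n" for i k
    unfolding c_def
  proof (rule cond_meas)
    have "i < n" using that by auto
    then show "insert i (g i) \<subseteq> {..<n}" using gi[of i] that by auto
    fix j assume "j \<in> insert i (g i)"
    moreover have "i < n" using that by auto
    ultimately have "j < k" using gi[of i] that by auto
    then show "(\<lambda>y. w y j) \<in> borel_measurable (leb {n1..<k})" by (rule wm)
  qed
  have base: "(\<integral>\<^sup>+y. ennreal (\<Prod>i<n1. c i (w y)) \<partial>leb {n1..<n1}) = ennreal (\<Prod>i<n1. c i z)"
  proof -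
    have "(\<Prod>i<n1. c i (w (\<lambda>k. undefined))) = (\<Prod>i<n1. c i z)"
    proof (rule prod.cong[OF refl])
      fix i assume "i \<in> {..<n1}"
      then show "c i (w (\<lambda>k. undefined)) = c i z" using n1 by (intro cdep) (auto simp: w_def)
    qed
    moreover have "(\<integral>\<^sup>+y. ennreal (\<Prod>i<n1. c i (w y)) \<partial>leb {}) = ennreal (\<Prod>i<n1. c i (w (\<lambda>k. undefined)))"
      by (rule lbp.nn_integral_empty) simp
    ultimately show ?thesis by simp
  qed
  have step: "(\<integral>\<^sup>+y. ennreal (\<Prod>i<Suc k. c i (w y)) \<partial>leb {n1..<Suc k}) = (\<integral>\<^sup>+y. ennreal (\<Prod>i<k. c i (w y)) \<partial>leb {n1..<k})"
    if k: "n1 \<le> k" "Suc k \<le> n" for k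
  proof -
    have ins: "{n1..<Suc k} = insert k {n1..<k}" using k by auto
    have kn: "k \<notin> {n1..<k}" by simp
    have "k < n" using k by auto
    then have gk: "g k \<subseteq> {..<k}" "insert k (g k) \<subseteq> {..<n}" "g k \<subseteq> {..<n}" using gi[of k] k by auto
    have meas: "(\<lambda>y. ennreal (\<Prod>i<Suc k. c i (w y))) \<in> borel_measurable (leb (insert k {n1..<k}))"
    proof -
      have "(\<lambda>y. \<Prod>i<Suc k. c i (w y)) \<in> borel_measurable (leb {n1..<Suc k})"
        using cm k by (intro borel_measurable_prod) auto
      then show ?thesis unfolding ins by measurable
    qed
    have wu: "w (y(k:=t)) = (w y)(k:=t)" for y t using k by (auto simp: w_def)
    have "(\<integral>\<^sup>+y. ennreal (\<Prod>i<Suc k. c i (w y)) \<partial>leb {n1..<Suc k}) =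
        (\<integral>\<^sup>+y. (\<integral>\<^sup>+t. ennreal (\<Prod>i<Suc k. c i (w (y(k:=t)))) \<partial>lborel) \<partial>leb {n1..<k})"
      unfolding ins by (rule lbp.product_nn_integral_insert[OF _ kn meas]) simp
    also have "\<dots> = (\<integral>\<^sup>+y. ennreal (\<Prod>i<k. c i (w y)) \<partial>leb {n1..<k})"
    proof (rule nn_integral_cong)
      fix y
      define P where "P = (\<Prod>i<k. c i (w y))"
      define D where "D = marg n f (g k) (w y)"
      have Ppos: "P > 0" unfolding P_def using cpos k by (intro prod_pos) auto
      have Dpos: "D > 0" unfolding D_def using marg_pos[OF gk(3)] by simp
      have e: "(\<Prod>i<Suc k. c i ((w y)(k:=t))) = (P / D) * marg n f (insert k (g k)) ((w y)(k:=t))" for t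
      proof -
        have "(\<Prod>i<k. c i ((w y)(k:=t))) = P" unfolding P_def
          using k by (intro prod.cong refl cdep) auto
        moreover have "marg n f (g k) ((w y)(k:=t)) = D" unfolding D_def
          using gk by (intro marg_dep) auto
        ultimately show ?thesis by (simp add: c_def cond_dens_def)
      qed
      have mt: "(\<lambda>t. ennreal (marg n f (insert k (g k)) ((w y)(k:=t)))) \<in> borel_measurable lborel"
      proof -
        have "(\<lambda>t. marg n f (insert k (g k)) ((w y)(k:=t))) \<in> borel_measurable lborel"
        proof (rule marg_meas[OF gk(2)])
          fix j show "(\<lambda>t. ((w y)(k:=t)) j) \<in> borel_measurable lborel" by (cases "j = k") auto
        qed
        then show ?thesis by measurable
      qed
      have kg: "k \<notin> g k" using gk by auto
      have "(\<integral>\<^sup>+t. ennreal (\<Prod>i<Suc k. c i (w (y(k:=t)))) \<partial>lborel) =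
          (\<integral>\<^sup>+t. ennreal (P / D) * ennreal (marg n f (insert k (g k)) ((w y)(k:=t))) \<partial>lborel)"
        unfolding wu e using Ppos Dpos marg_pos[OF gk(2)]
        by (intro nn_integral_cong) (simp add: ennreal_mult'[symmetric] less_imp_le)
      also have "\<dots> = ennreal (P / D) * ennreal D"
        using nn_integral_cmult[OF mt] marg_step[OF kg gk(2), of "w y"] by (simp add: D_def)
      also have "\<dots> = ennreal P" using Ppos Dpos by (simp add: ennreal_mult'[symmetric] less_imp_le)
      finally show "(\<integral>\<^sup>+t. ennreal (\<Prod>i<Suc k. c i (w (y(k:=t)))) \<partial>lborel) = ennreal (\<Prod>i<k. c i (w y))"
        by (simp add: P_def)
    qed
    finally show ?thesis .
  qed
  have P: "(\<integral>\<^sup>+y. ennreal (\<Prod>i<k. c i (w y)) \<partial>leb {n1..<k}) = ennreal (\<Prod>i<n1. c i z)"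
    if "n1 \<le> k" "k \<le> n" for k
    using that
  proof (induction k)
    case 0 then show ?case using base by simp
  next
    case (Suc k)
    show ?case
    proof (cases "n1 = Suc k")
      case True then show ?thesis using base by simp
    next
      case False
      then have "n1 \<le> k" using Suc by auto
      then show ?thesis using Suc step[of k] by simp
    qed
  qed
  have diff: "{..<n} - {..<n1} = {n1..<n}" by auto
  have vw: "vecchia n f g (\<lambda>j. if j \<in> {..<n1} then z j else y j) = (\<Prod>i<n. c i (w y))" for y
    by (simp add: vecchia_def c_def w_def)
  have hb: "has_bochner_integral (leb {n1..<n}) (\<lambda>y. \<Prod>i<n. c i (w y)) (\<Prod>i<n1. c i z)"
  proof (rule has_bochner_integral_nn_integral)
    show "(\<lambda>y. \<Prod>i<n. c i (w y)) \<in> borel_measurable (leb {n1..<n})"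
      using cm by (intro borel_measurable_prod) auto
    show "AE x in leb {n1..<n}. 0 \<le> (\<Prod>i<n. c i (w x))"
      using cpos by (intro AE_I2 prod_nonneg) (auto simp: less_imp_le)
    show "0 \<le> (\<Prod>i<n1. c i z)" using cpos n1 by (intro prod_nonneg) (auto simp: less_imp_le)
    show "(\<integral>\<^sup>+y. ennreal (\<Prod>i<n. c i (w y)) \<partial>leb {n1..<n}) = ennreal (\<Prod>i<n1. c i z)"
      using P[of n] n1 by simp
  qed
  show ?thesis unfolding marg_def diff vw using has_bochner_integral_integral_eq[OF hb] by (simp add: c_def)
qed

end

context gm begin

lemma gain_i:
  assumes "H \<subseteq> G" "G \<subseteq> {..<i}" "i < n"
  shows "(\<integral>x. f x * ln (cond_dens n f H i x) \<partial>leb {..<n}) \<le> (\<integral>x. f x * ln (cond_dens n f G i x) \<partial>leb {..<n})"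
proof -
  have H: "H \<subseteq> {..<i}" using assms by auto
  have e: "(\<lambda>x. f x * (ln (cond_dens n f G i x) - ln (cond_dens n f H i x))) =
      (\<lambda>x. f x * ln (cond_dens n f G i x) - f x * ln (cond_dens n f H i x))"
    by (simp add: right_diff_distrib)
  have "0 \<le> (\<integral>x. f x * (ln (cond_dens n f G i x) - ln (cond_dens n f H i x)) \<partial>leb {..<n})"
    by (rule cond_gain[OF assms])
  also have "\<dots> = (\<integral>x. f x * ln (cond_dens n f G i x) \<partial>leb {..<n}) - (\<integral>x. f x * ln (cond_dens n f H i x) \<partial>leb {..<n})"
    unfolding e using int_ln_cond[OF assms(2,3)] int_ln_cond[OF H assms(3)]
    by (rule Bochner_Integration.integral_diff)
  finally show ?thesis by simp
qed

lemma int_flnf: "integrable (leb {..<n}) (\<lambda>x. f x * ln (f x))"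
proof -
  have "(\<lambda>x. f x * ln (f x)) = (\<lambda>x. f x * qf {..<n} A b c x)" by (simp add: fdef)
  then show ?thesis using int_qf[of "{..<n}"] by simp
qed

lemma vecchia_pos:
  assumes g: "\<forall>i<n. g i \<subseteq> {..<i}"
  shows "vecchia n f g x > 0"
  unfolding vecchia_def using g cond_pos by (intro prod_pos) auto

lemma KL_form:
  assumes g: "\<forall>i<n. g i \<subseteq> {..<i}"
  shows "KL n f (vecchia n f g) = (\<integral>x. f x * ln (f x) \<partial>leb {..<n}) -
            (\<Sum>i<n. \<integral>x. f x * ln (cond_dens n f (g i) i x) \<partial>leb {..<n})"
proof -
  have cp: "\<And>i x. i \<in> {..<n} \<Longrightarrow> cond_dens n f (g i) i x > 0" using g cond_pos by auto
  have ci: "\<And>i. i \<in> {..<n} \<Longrightarrow> integrable (leb {..<n}) (\<lambda>x. f x * ln (cond_dens n f (g i) i x))"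
    using g int_ln_cond by auto
  have pw: "f x * ln (f x / vecchia n f g x) = f x * ln (f x) - (\<Sum>i<n. f x * ln (cond_dens n f (g i) i x))" for x
  proof -
    have "ln (f x / vecchia n f g x) = ln (f x) - ln (vecchia n f g x)"
      using f_pos[of x] vecchia_pos[OF g, of x] by (simp add: ln_div)
    moreover have "ln (vecchia n f g x) = (\<Sum>i<n. ln (cond_dens n f (g i) i x))"
      unfolding vecchia_def
    proof (rule ln_prod)
      fix i assume "i \<in> {..<n}"
      then show "cond_dens n f (g i) i x \<noteq> 0" using cp[of i x] by simp
    qed simp
    ultimately show ?thesis by (simp add: right_diff_distrib sum_distrib_left)
  qed
  have "KL n f (vecchia n f g) = (\<integral>x. f x * ln (f x) - (\<Sum>i<n. f x * ln (cond_dens n f (g i) i x)) \<partial>leb {..<n})"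
    unfolding KL_def pw ..
  also have "\<dots> = (\<integral>x. f x * ln (f x) \<partial>leb {..<n}) - (\<integral>x. (\<Sum>i<n. f x * ln (cond_dens n f (g i) i x)) \<partial>leb {..<n})"
    using int_flnf ci by (intro Bochner_Integration.integral_diff Bochner_Integration.integrable_sum) auto
  also have "(\<integral>x. (\<Sum>i<n. f x * ln (cond_dens n f (g i) i x)) \<partial>leb {..<n}) = (\<Sum>i<n. \<integral>x. f x * ln (cond_dens n f (g i) i x) \<partial>leb {..<n})"
    using ci by (intro Bochner_Integration.integral_sum) auto
  finally show ?thesis .
qed

end

context gm begin

lemma CKL_form:
  assumes g: "\<forall>i<n. g i \<subseteq> {..<i}" and n1: "n1 \<le> n"
  shows "CKL n1 n f (vecchia n f g) = (\<integral>x. f x * ln (f x) \<partial>leb {..<n}) - (\<integral>x. f x * ln (marg n f {..<n1} x) \<partial>leb {..<n})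
            - (\<Sum>i\<in>{n1..<n}. \<integral>x. f x * ln (cond_dens n f (g i) i x) \<partial>leb {..<n})"
proof -
  define c where "c i x = cond_dens n f (g i) i x" for i x
  define m1 where "m1 = marg n f {..<n1}"
  have s1: "{..<n1} \<subseteq> {..<n}" using n1 by auto
  have cp: "\<And>i x. i < n \<Longrightarrow> c i x > 0" unfolding c_def using g cond_pos by auto
  have m1p: "\<And>x. m1 x > 0" unfolding m1_def using marg_pos[OF s1] by auto
  have ci: "\<And>i. i \<in> {n1..<n} \<Longrightarrow> integrable (leb {..<n}) (\<lambda>x. f x * ln (c i x))"
    unfolding c_def using g int_ln_cond by auto
  have im1: "integrable (leb {..<n}) (\<lambda>x. f x * ln (m1 x))" unfolding m1_def by (rule int_ln_marg[OF s1])
  define F where "F x = f x * ln (f x) - f x * ln (m1 x) - (\<Sum>i\<in>{n1..<n}. f x * ln (c i x))" for x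
  have iS: "integrable (leb {..<n}) (\<lambda>x. \<Sum>i\<in>{n1..<n}. f x * ln (c i x))"
    using ci by (intro Bochner_Integration.integrable_sum) auto
  have iF: "integrable (leb {..<n}) F"
    unfolding F_def[abs_def] using int_flnf im1 iS by (intro Bochner_Integration.integrable_diff)
  have rhs: "(\<integral>x. F x \<partial>leb {..<n}) = (\<integral>x. f x * ln (f x) \<partial>leb {..<n}) - (\<integral>x. f x * ln (m1 x) \<partial>leb {..<n})
            - (\<Sum>i\<in>{n1..<n}. \<integral>x. f x * ln (c i x) \<partial>leb {..<n})"
  proof -
    have "(\<integral>x. F x \<partial>leb {..<n}) = (\<integral>x. f x * ln (f x) - f x * ln (m1 x) \<partial>leb {..<n}) - (\<integral>x. (\<Sum>i\<in>{n1..<n}. f x * ln (c i x)) \<partial>leb {..<n})"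
      unfolding F_def using int_flnf im1 iS by (intro Bochner_Integration.integral_diff Bochner_Integration.integrable_diff)
    also have "(\<integral>x. f x * ln (f x) - f x * ln (m1 x) \<partial>leb {..<n}) = (\<integral>x. f x * ln (f x) \<partial>leb {..<n}) - (\<integral>x. f x * ln (m1 x) \<partial>leb {..<n})"
      using int_flnf im1 by (rule Bochner_Integration.integral_diff)
    also have "(\<integral>x. (\<Sum>i\<in>{n1..<n}. f x * ln (c i x)) \<partial>leb {..<n}) = (\<Sum>i\<in>{n1..<n}. \<integral>x. f x * ln (c i x) \<partial>leb {..<n})"
      using ci by (intro Bochner_Integration.integral_sum) auto
    finally show ?thesis .
  qed
  have un: "{..<n1} \<union> {n1..<n} = {..<n}" and dj: "{..<n1} \<inter> {n1..<n} = {}" using n1 by auto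
  have fold: "(\<integral>x. F x \<partial>leb {..<n}) = (\<integral>z. (\<integral>y. F (merge {..<n1} {n1..<n} (z,y)) \<partial>leb {n1..<n}) \<partial>leb {..<n1})"
    using lbp.product_integral_fold[OF dj _ _ iF[folded un]] unfolding un by simp
  have "CKL n1 n f (vecchia n f g) = (\<integral>z. (\<integral>y. F (merge {..<n1} {n1..<n} (z,y)) \<partial>leb {n1..<n}) \<partial>leb {..<n1})"
    unfolding CKL_def Let_def m1_def[symmetric]
  proof (rule Bochner_Integration.integral_cong[OF refl])
    fix z
    have inner: "(\<integral>y. (f (merge_vec n1 z y) / m1 (merge_vec n1 z y)) *
                 ln ((f (merge_vec n1 z y) / m1 (merge_vec n1 z y)) /
                     (vecchia n f g (merge_vec n1 z y) / marg n (vecchia n f g) {..<n1} (merge_vec n1 z y))) \<partial>leb {n1..<n})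
          = (\<integral>y. F (merge {..<n1} {n1..<n} (z,y)) / m1 z \<partial>leb {n1..<n})"
    proof (rule Bochner_Integration.integral_cong[OF refl])
      fix y assume y: "y \<in> space (leb {n1..<n})"
      define x where "x = merge_vec n1 z y"
      have mx: "merge {..<n1} {n1..<n} (z,y) = x"
      proof (rule ext)
        fix j
        show "merge {..<n1} {n1..<n} (z,y) j = x j"
        proof (cases "j < n")
          case True then show ?thesis by (simp add: merge_def x_def merge_vec_def)
        next
          case False
          then have "y j = undefined" using y n1 by (intro PiE_arb[of y "{n1..<n}"]) (auto simp: space_PiM)
          then show ?thesis using False n1 by (simp add: merge_def x_def merge_vec_def)
        qed
      qed
      have m1x: "m1 x = m1 z" unfolding m1_def by (rule marg_dep) (simp add: x_def merge_vec_def)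
      have vm: "marg n (vecchia n f g) {..<n1} x = (\<Prod>i<n1. c i x)"
        unfolding c_def by (rule vecchia_marg[OF g n1])
      have split: "(\<Prod>i<n. c i x) = (\<Prod>i<n1. c i x) * (\<Prod>i\<in>{n1..<n}. c i x)"
        using prod.atLeastLessThan_concat[of 0 n1 n "\<lambda>i. c i x"] n1 by (simp add: atLeast0LessThan)
      have p1: "(\<Prod>i<n1. c i x) > 0" using cp n1 by (intro prod_pos) auto
      have p2: "(\<Prod>i\<in>{n1..<n}. c i x) > 0" using cp by (intro prod_pos) auto
      have q: "vecchia n f g x / marg n (vecchia n f g) {..<n1} x = (\<Prod>i\<in>{n1..<n}. c i x)"
      proof -
        have v: "vecchia n f g x = (\<Prod>i<n. c i x)" by (simp add: vecchia_def c_def)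
        have nz: "(\<Prod>i<n1. c i x) \<noteq> 0" using p1 by (metis less_irrefl)
        show ?thesis unfolding vm v split by (rule nonzero_mult_div_cancel_left[OF nz])
      qed
      have lq: "ln (\<Prod>i\<in>{n1..<n}. c i x) = (\<Sum>i\<in>{n1..<n}. ln (c i x))"
      proof (rule ln_prod)
        fix i assume "i \<in> {n1..<n}"
        then show "c i x \<noteq> 0" using cp[of i x] by simp
      qed simp
      have fx: "f x > 0" by (rule f_pos)
      have "ln ((f x / m1 z) / (\<Prod>i\<in>{n1..<n}. c i x)) = ln (f x / m1 z) - ln (\<Prod>i\<in>{n1..<n}. c i x)"
        using fx m1p[of z] p2 by (intro ln_divide_pos) auto
      also have "ln (f x / m1 z) = ln (f x) - ln (m1 z)"
        using fx m1p[of z] by (intro ln_divide_pos) auto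
      finally have "ln ((f x / m1 z) / (\<Prod>i\<in>{n1..<n}. c i x)) = ln (f x) - ln (m1 z) - (\<Sum>i\<in>{n1..<n}. ln (c i x))"
        unfolding lq .
      then have "(f x / m1 z) * ln ((f x / m1 z) / (\<Prod>i\<in>{n1..<n}. c i x)) = F x / m1 z"
        unfolding F_def m1x[symmetric] by (simp add: m1x right_diff_distrib sum_distrib_left diff_divide_distrib sum_divide_distrib)
      then show "(f (merge_vec n1 z y) / m1 (merge_vec n1 z y)) *
                 ln ((f (merge_vec n1 z y) / m1 (merge_vec n1 z y)) /
                     (vecchia n f g (merge_vec n1 z y) / marg n (vecchia n f g) {..<n1} (merge_vec n1 z y)))
              = F (merge {..<n1} {n1..<n} (z,y)) / m1 z"
        unfolding mx x_def[symmetric] m1x q .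
    qed
    show "m1 z * (\<integral>y. (f (merge_vec n1 z y) / m1 (merge_vec n1 z y)) *
                 ln ((f (merge_vec n1 z y) / m1 (merge_vec n1 z y)) /
                     (vecchia n f g (merge_vec n1 z y) / marg n (vecchia n f g) {..<n1} (merge_vec n1 z y))) \<partial>leb {n1..<n})
          = (\<integral>y. F (merge {..<n1} {n1..<n} (z,y)) \<partial>leb {n1..<n})"
      unfolding inner using m1p[of z] by simp
  qed
  then show ?thesis unfolding fold[symmetric] rhs m1_def c_def by simp
qed

end

theorem proposition1:
  fixes n1 n2 :: nat and f :: "(nat \<Rightarrow> real) \<Rightarrow> real" and g1 g2 :: "nat \<Rightarrow> nat set"
  assumes "is_mvn_density (n1 + n2) f"
    and "\<forall>i < n1 + n2. g1 i \<subseteq> {..<i}"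
    and "\<forall>i < n1 + n2. g2 i \<subseteq> {..<i}"
  shows "((\<forall>i < n1 + n2. g1 i \<subseteq> g2 i) \<longrightarrow>
            KL (n1 + n2) f (vecchia (n1 + n2) f g1) \<ge> KL (n1 + n2) f (vecchia (n1 + n2) f g2))
       \<and> ((\<forall>i \<in> {n1..<n1 + n2}. g1 i \<subseteq> g2 i) \<longrightarrow>
            CKL n1 (n1 + n2) f (vecchia (n1 + n2) f g1) \<ge> CKL n1 (n1 + n2) f (vecchia (n1 + n2) f g2))"
proof -
  obtain A b c where nd: "negdef {..<n1 + n2} A" and fd: "f = (\<lambda>x. exp (qf {..<n1 + n2} A b c x))"
    and fi: "(\<integral>x. f x \<partial>leb {..<n1 + n2}) = 1"
    using mvn_class[OF assms(1)] by blast
  interpret gm "n1 + n2" f A b c using nd fd fi by unfold_locales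
  have G2: "\<And>i. i < n1 + n2 \<Longrightarrow> g2 i \<subseteq> {..<i}" using assms(3) by auto
  show ?thesis
  proof (intro conjI impI)
    assume sub: "\<forall>i < n1 + n2. g1 i \<subseteq> g2 i"
    have "(\<Sum>i<n1 + n2. \<integral>x. f x * ln (cond_dens (n1 + n2) f (g1 i) i x) \<partial>leb {..<n1 + n2}) \<le>
          (\<Sum>i<n1 + n2. \<integral>x. f x * ln (cond_dens (n1 + n2) f (g2 i) i x) \<partial>leb {..<n1 + n2})"
    proof (rule sum_mono)
      fix i assume "i \<in> {..<n1 + n2}"
      then have i: "i < n1 + n2" by simp
      show "(\<integral>x. f x * ln (cond_dens (n1 + n2) f (g1 i) i x) \<partial>leb {..<n1 + n2}) \<le>
          (\<integral>x. f x * ln (cond_dens (n1 + n2) f (g2 i) i x) \<partial>leb {..<n1 + n2})"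
        using sub i G2[OF i] by (intro gain_i) auto
    qed
    then show "KL (n1 + n2) f (vecchia (n1 + n2) f g1) \<ge> KL (n1 + n2) f (vecchia (n1 + n2) f g2)"
      unfolding KL_form[OF assms(2)] KL_form[OF assms(3)] by simp
  next
    assume sub: "\<forall>i \<in> {n1..<n1 + n2}. g1 i \<subseteq> g2 i"
    have "(\<Sum>i\<in>{n1..<n1 + n2}. \<integral>x. f x * ln (cond_dens (n1 + n2) f (g1 i) i x) \<partial>leb {..<n1 + n2}) \<le>
          (\<Sum>i\<in>{n1..<n1 + n2}. \<integral>x. f x * ln (cond_dens (n1 + n2) f (g2 i) i x) \<partial>leb {..<n1 + n2})"
    proof (rule sum_mono)
      fix i assume i': "i \<in> {n1..<n1 + n2}"
      then have i: "i < n1 + n2" by simp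
      show "(\<integral>x. f x * ln (cond_dens (n1 + n2) f (g1 i) i x) \<partial>leb {..<n1 + n2}) \<le>
          (\<integral>x. f x * ln (cond_dens (n1 + n2) f (g2 i) i x) \<partial>leb {..<n1 + n2})"
        using sub i' i G2[OF i] by (intro gain_i) auto
    qed
    then show "CKL n1 (n1 + n2) f (vecchia (n1 + n2) f g1) \<ge> CKL n1 (n1 + n2) f (vecchia (n1 + n2) f g2)"
      unfolding CKL_form[OF assms(2) le_add1] CKL_form[OF assms(3) le_add1] by simp
  qed
qed


end
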